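(* Let $q$ be a prime power, and let $D_1$ be a linear $[n,k]$ code over $\mathbb{F}_q$ with $k\times n$ generator matrix $G_1$. Let $\mathrm{MAut}(D_1)$ be the group of $n\times n$ monomial matrices $P$ over $\mathbb{F}_q$ with $D_1P=D_1$, and let $f:\mathrm{MAut}(D_1)\to \mathrm{GL}(k,q)$ be the homomorphism defined by $f(P)G_1=G_1P$. Let $m$ be a positive integer and let $a,b\in\mathbb{F}_q^k$. Suppose that the column vectors $a^T$ and $b^T$ lie in the same orbit of the image $\mathrm{im}(f)\le \mathrm{GL}(k,q)$ acting on $\mathbb{F}_q^k$ (column vectors) by left multiplication. Then the $[n+m,k]$ codes over $\mathbb{F}_q$ with generator matrices \[\begin{pmatrix} G_1 & a^T & \cdots & a^T\end{pmatrix}\quad\text{and}\quad \begin{pmatrix} G_1 & b^T & \cdots & b^T\end{pmatrix}\] (each with $m$ copies of the appended column) are monomially equivalent.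
   Context: Two codes $C,C'$ of length $N$ over $\mathbb{F}_q$ are monomially equivalent if there is an $N\times N$ monomial matrix $M$ over $\mathbb{F}_q$ (a permutation matrix times an invertible diagonal matrix) such that $C'=CM=\{cM : c\in C\}$. For a code $C$, $CM$ means the image of $C$ under right multiplication by $M$, codewords being row vectors. *)

theory Defs
  imports Main "HOL-Combinatorics.Permutations"
begin

text \<open>Vectors of length N over a field are functions nat => 'a, canonically zero at
indices >= N. Matrices are functions nat => nat => 'a with explicit dimensions.\<close>

definition rowspace :: "(nat \<Rightarrow> nat \<Rightarrow> 'a::field) \<Rightarrow> nat \<Rightarrow> nat \<Rightarrow> (nat \<Rightarrow> 'a) set" where
  "rowspace G k N = {(\<lambda>j. if j < N then (\<Sum>i<k. c i * G i j) else 0) | c. True}"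

definition full_row_rank :: "(nat \<Rightarrow> nat \<Rightarrow> 'a::field) \<Rightarrow> nat \<Rightarrow> nat \<Rightarrow> bool" where
  "full_row_rank G k N \<longleftrightarrow>
     (\<forall>c. (\<forall>j<N. (\<Sum>i<k. c i * G i j) = 0) \<longrightarrow> (\<forall>i<k. c i = 0))"

definition monomial_matrix :: "nat \<Rightarrow> (nat \<Rightarrow> nat \<Rightarrow> 'a::field) \<Rightarrow> bool" where
  "monomial_matrix N M \<longleftrightarrow>
     (\<exists>\<sigma> d. \<sigma> permutes {..<N} \<and> (\<forall>i<N. d i \<noteq> 0) \<and>
        (\<forall>i j. M i j = (if i < N \<and> j < N \<and> j = \<sigma> i then d i else 0)))"

definition vec_mat :: "nat \<Rightarrow> (nat \<Rightarrow> 'a::field) \<Rightarrow> (nat \<Rightarrow> nat \<Rightarrow> 'a) \<Rightarrow> (nat \<Rightarrow> 'a)" where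
  "vec_mat N c M = (\<lambda>j. if j < N then (\<Sum>i<N. c i * M i j) else 0)"

definition code_image :: "(nat \<Rightarrow> 'a::field) set \<Rightarrow> nat \<Rightarrow> (nat \<Rightarrow> nat \<Rightarrow> 'a) \<Rightarrow> (nat \<Rightarrow> 'a) set" where
  "code_image C N M = (\<lambda>c. vec_mat N c M) ` C"

definition monomially_equivalent :: "nat \<Rightarrow> (nat \<Rightarrow> 'a::field) set \<Rightarrow> (nat \<Rightarrow> 'a) set \<Rightarrow> bool" where
  "monomially_equivalent N C C' \<longleftrightarrow> (\<exists>M. monomial_matrix N M \<and> C' = code_image C N M)"

definition MAut :: "(nat \<Rightarrow> nat \<Rightarrow> 'a::field) \<Rightarrow> nat \<Rightarrow> nat \<Rightarrow> (nat \<Rightarrow> nat \<Rightarrow> 'a) set" where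
  "MAut G k n = {P. monomial_matrix n P \<and> code_image (rowspace G k n) n P = rowspace G k n}"

definition fhom :: "(nat \<Rightarrow> nat \<Rightarrow> 'a::field) \<Rightarrow> nat \<Rightarrow> nat \<Rightarrow> (nat \<Rightarrow> nat \<Rightarrow> 'a) \<Rightarrow> (nat \<Rightarrow> nat \<Rightarrow> 'a)" where
  "fhom G k n P = (THE A. (\<forall>i j. \<not> (i < k \<and> j < k) \<longrightarrow> A i j = 0) \<and>
      (\<forall>i<k. \<forall>j<n. (\<Sum>l<k. A i l * G l j) = (\<Sum>l<n. G i l * P l j)))"

definition mat_vec :: "nat \<Rightarrow> (nat \<Rightarrow> nat \<Rightarrow> 'a::field) \<Rightarrow> (nat \<Rightarrow> 'a) \<Rightarrow> (nat \<Rightarrow> 'a)" where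
  "mat_vec k A a = (\<lambda>i. if i < k then (\<Sum>j<k. A i j * a j) else 0)"

definition append_cols :: "(nat \<Rightarrow> nat \<Rightarrow> 'a::field) \<Rightarrow> nat \<Rightarrow> nat \<Rightarrow> (nat \<Rightarrow> 'a) \<Rightarrow> (nat \<Rightarrow> nat \<Rightarrow> 'a)" where
  "append_cols G n m a = (\<lambda>i j. if j < n then G i j else if j < n + m then a i else 0)"

end

theory Submission
  imports Defs
begin

lemma sum_monomial:
  fixes c d :: "nat \<Rightarrow> 'a::field"
  assumes "\<sigma> permutes {..<N}" "j < N"
  shows "(\<Sum>i<N. c i * (if i < N \<and> j < N \<and> j = \<sigma> i then d i else 0)) = c (inv \<sigma> j) * d (inv \<sigma> j)"
proof -
  have "(\<Sum>i<N. c i * (if i < N \<and> j < N \<and> j = \<sigma> i then d i else 0))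
      = (\<Sum>i<N. if i = inv \<sigma> j then c i * d i else 0)"
  proof (rule sum.cong[OF refl])
    fix i assume "i \<in> {..<N}"
    have "(j = \<sigma> i) = (i = inv \<sigma> j)" using permutes_inv_eq[OF assms(1), of j i] by auto
    then show "c i * (if i < N \<and> j < N \<and> j = \<sigma> i then d i else 0) = (if i = inv \<sigma> j then c i * d i else 0)"
      using \<open>i \<in> {..<N}\<close> assms(2) by auto
  qed
  also have "\<dots> = c (inv \<sigma> j) * d (inv \<sigma> j)"
  proof -
    have "inv \<sigma> j \<in> {..<N}"
      using permutes_in_image[OF permutes_inv[OF assms(1)]] assms(2) by auto
    then show ?thesis by (simp add: sum.delta)
  qed
  finally show ?thesis .
qed

lemma vec_mat_monomial:
  assumes "\<sigma> permutes {..<N}" "\<forall>i j. M i j = (if i < N \<and> j < N \<and> j = \<sigma> i then d i else 0)"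
  shows "vec_mat N c M j = (if j < N then c (inv \<sigma> j) * d (inv \<sigma> j) else 0)"
proof (cases "j < N")
  case True
  have "vec_mat N c M j = (\<Sum>i<N. c i * (if i < N \<and> j < N \<and> j = \<sigma> i then d i else 0))"
    using True assms(2) by (simp add: vec_mat_def)
  then show ?thesis using sum_monomial[OF assms(1) True] True by simp
qed (simp add: vec_mat_def)

lemma monomially_equivalent_sym:
  assumes "monomially_equivalent N C C'" "\<forall>x\<in>C. \<forall>j\<ge>N. x j = 0"
  shows "monomially_equivalent N C' C"
proof -
  obtain M where mM: "monomial_matrix N M" and C': "C' = code_image C N M"
    using assms(1) unfolding monomially_equivalent_def by blast
  obtain \<sigma> d where s: "\<sigma> permutes {..<N}" and d: "\<forall>i<N. d i \<noteq> 0"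
    and M: "\<forall>i j. M i j = (if i < N \<and> j < N \<and> j = \<sigma> i then d i else 0)"
    using mM unfolding monomial_matrix_def by blast
  define d' where "d' i = inverse (d (inv \<sigma> i))" for i
  define M' where "M' i j = (if i < N \<and> j < N \<and> j = inv \<sigma> i then d' i else 0)" for i j
  have s': "inv \<sigma> permutes {..<N}" using permutes_inv[OF s] .
  have invN: "inv \<sigma> i < N" if "i < N" for i
    using permutes_in_image[OF s'] that by auto
  have mM': "monomial_matrix N M'"
    unfolding monomial_matrix_def
  proof (intro exI conjI)
    show "inv \<sigma> permutes {..<N}" by (rule s')
    show "\<forall>i<N. d' i \<noteq> 0" using d invN by (simp add: d'_def)
    show "\<forall>i j. M' i j = (if i < N \<and> j < N \<and> j = inv \<sigma> i then d' i else 0)"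
      by (simp add: M'_def)
  qed
  have inv2: "inv (inv \<sigma>) = \<sigma>" using permutes_inv_inv[OF s] .
  have backw: "vec_mat N (vec_mat N x M) M' = x" if "x \<in> C" for x
  proof
    fix j
    show "vec_mat N (vec_mat N x M) M' j = x j"
    proof (cases "j < N")
      case True
      have sj: "\<sigma> j < N" using permutes_in_image[OF s] True by auto
      have "vec_mat N (vec_mat N x M) M' j = vec_mat N x M (\<sigma> j) * d' (\<sigma> j)"
        using vec_mat_monomial[OF s', of M' d'] True inv2 by (simp add: M'_def)
      also have "\<dots> = x j * d j * inverse (d j)"
        using vec_mat_monomial[OF s M] sj by (simp add: d'_def permutes_inverses(2)[OF s])
      also have "\<dots> = x j" using d True by simp
      finally show ?thesis .
    next
      case False
      then show ?thesis using assms(2) that by (simp add: vec_mat_def)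
    qed
  qed
  have "C = code_image C' N M'"
  proof -
    have "code_image C' N M' = (\<lambda>x. vec_mat N (vec_mat N x M) M') ` C"
      unfolding C' code_image_def by (simp add: image_image)
    also have "\<dots> = C" using backw by simp
    finally show ?thesis by simp
  qed
  then show ?thesis using mM' unfolding monomially_equivalent_def by blast
qed

lemma swap_lemma:
  fixes c :: "nat \<Rightarrow> 'a::field"
  shows "(\<Sum>i\<in>I. c i * (\<Sum>l\<in>L. A i l * g l)) = (\<Sum>l\<in>L. (\<Sum>i\<in>I. c i * A i l) * g l)"
proof -
  have "(\<Sum>i\<in>I. c i * (\<Sum>l\<in>L. A i l * g l)) = (\<Sum>i\<in>I. \<Sum>l\<in>L. c i * A i l * g l)"
    by (simp add: sum_distrib_left mult.assoc)
  also have "\<dots> = (\<Sum>l\<in>L. \<Sum>i\<in>I. c i * A i l * g l)" by (rule sum.swap)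
  also have "\<dots> = (\<Sum>l\<in>L. (\<Sum>i\<in>I. c i * A i l) * g l)"
    by (simp add: sum_distrib_right)
  finally show ?thesis .
qed

lemma frr:
  fixes G :: "nat \<Rightarrow> nat \<Rightarrow> 'a::field"
  shows "full_row_rank G k N \<Longrightarrow> \<forall>j<N. (\<Sum>i<k. c i * G i j) = 0 \<Longrightarrow> \<forall>i<k. c i = 0"
  unfolding full_row_rank_def by blast

lemma fhom_prop:
  fixes G :: "nat \<Rightarrow> nat \<Rightarrow> 'a::field"
  assumes fr: "full_row_rank G k n" and PM: "P \<in> MAut G k n"
  shows "\<forall>i<k. \<forall>j<n. (\<Sum>l<k. fhom G k n P i l * G l j) = (\<Sum>l<n. G i l * P l j)"
proof -
  let ?Q = "\<lambda>A. (\<forall>i j. \<not> (i < k \<and> j < k) \<longrightarrow> A i j = 0) \<and>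
      (\<forall>i<k. \<forall>j<n. (\<Sum>l<k. A i l * G l j) = (\<Sum>l<n. G i l * P l j))"
  have img: "code_image (rowspace G k n) n P = rowspace G k n"
    using PM unfolding MAut_def by blast
  have ex: "\<forall>i. i < k \<longrightarrow> (\<exists>c. \<forall>j<n. (\<Sum>l<n. G i l * P l j) = (\<Sum>l<k. c l * G l j))"
  proof (intro allI impI)
    fix i assume i: "i < k"
    define r where "r = (\<lambda>j. if j < n then G i j else 0)"
    have "r \<in> rowspace G k n"
    proof -
      have h1: "(\<Sum>l<k. (if l = i then 1 else 0) * G l j) = G i j" for j
      proof -
        have "(\<Sum>l<k. (if l = i then 1 else 0) * G l j) = (\<Sum>l<k. if l = i then G l j else 0)"
          by (intro sum.cong) auto
        then show ?thesis using i by (simp add: sum.delta)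
      qed
      have "r = (\<lambda>j. if j < n then (\<Sum>l<k. (\<lambda>l. if l = i then 1 else 0) l * G l j) else 0)"
        unfolding r_def by (rule ext) (simp only: h1)
      then show ?thesis unfolding rowspace_def by (intro CollectI exI[of _ "\<lambda>l. if l = i then 1 else 0"]) simp
    qed
    then have "vec_mat n r P \<in> rowspace G k n"
      using img unfolding code_image_def by blast
    then obtain c where hc: "vec_mat n r P = (\<lambda>j. if j < n then (\<Sum>l<k. c l * G l j) else 0)"
      unfolding rowspace_def by blast
    have "\<forall>j<n. (\<Sum>l<n. G i l * P l j) = (\<Sum>l<k. c l * G l j)"
    proof (intro allI impI)
      fix j assume j: "j < n"
      have "(\<Sum>l<n. G i l * P l j) = vec_mat n r P j"
        using j by (simp add: vec_mat_def r_def)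
      also have "\<dots> = (\<Sum>l<k. c l * G l j)" using hc j by simp
      finally show "(\<Sum>l<n. G i l * P l j) = (\<Sum>l<k. c l * G l j)" .
    qed
    then show "\<exists>c. \<forall>j<n. (\<Sum>l<n. G i l * P l j) = (\<Sum>l<k. c l * G l j)" by blast
  qed
  define C where "C i = (SOME c. \<forall>j<n. (\<Sum>l<n. G i l * P l j) = (\<Sum>l<k. c l * G l j))" for i
  have hC: "\<forall>i. i < k \<longrightarrow> (\<forall>j<n. (\<Sum>l<n. G i l * P l j) = (\<Sum>l<k. C i l * G l j))"
  proof (rule allI, rule impI)
    fix i assume "i < k"
    then have exi: "\<exists>c. \<forall>j<n. (\<Sum>l<n. G i l * P l j) = (\<Sum>l<k. c l * G l j)"
      using ex by blast
    show "\<forall>j<n. (\<Sum>l<n. G i l * P l j) = (\<Sum>l<k. C i l * G l j)"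
      unfolding C_def by (rule someI_ex[OF exi])
  qed
  define A where "A i l = (if i < k \<and> l < k then C i l else 0)" for i l
  have QA: "?Q A"
  proof
    show "\<forall>i j. \<not> (i < k \<and> j < k) \<longrightarrow> A i j = 0" by (simp add: A_def)
    show "\<forall>i<k. \<forall>j<n. (\<Sum>l<k. A i l * G l j) = (\<Sum>l<n. G i l * P l j)"
      using hC by (simp add: A_def)
  qed
  have uniq: "B = A" if "?Q B" for B
  proof (intro ext)
    fix i l
    show "B i l = A i l"
    proof (cases "i < k \<and> l < k")
      case True
      have "\<forall>j<n. (\<Sum>l<k. (B i l - A i l) * G l j) = 0"
      proof (intro allI impI)
        fix j assume j: "j < n"
        have eB: "(\<Sum>l<k. B i l * G l j) = (\<Sum>l<n. G i l * P l j)"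
          using that True j by simp
        have eA: "(\<Sum>l<k. A i l * G l j) = (\<Sum>l<n. G i l * P l j)"
          using QA True j by simp
        have "(\<Sum>l<k. (B i l - A i l) * G l j) = (\<Sum>l<k. B i l * G l j) - (\<Sum>l<k. A i l * G l j)"
          by (simp add: left_diff_distrib sum_subtractf)
        then show "(\<Sum>l<k. (B i l - A i l) * G l j) = 0" using eA eB by simp
      qed
      then have "\<forall>l<k. B i l - A i l = 0"
        by (rule frr[OF fr])
      then show ?thesis using True by simp
    next
      case False
      then show ?thesis using that QA by simp
    qed
  qed
  have ex1: "\<exists>!A. ?Q A" by (rule ex1I[of _ A]) (rule QA, rule uniq)
  have "?Q (fhom G k n P)" unfolding fhom_def by (rule theI'[OF ex1])
  then show ?thesis by (rule conjunct2)
qed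

theorem lemma2p1:
  fixes G1 :: "nat \<Rightarrow> nat \<Rightarrow> 'a::{finite,field}"
    and a b :: "nat \<Rightarrow> 'a"
    and n k m :: nat
  assumes "full_row_rank G1 k n"
    and "m > 0"
    and "\<exists>P \<in> MAut G1 k n. \<forall>i<k. b i = mat_vec k (fhom G1 k n P) a i"
  shows "monomially_equivalent (n + m)
           (rowspace (append_cols G1 n m a) k (n + m))
           (rowspace (append_cols G1 n m b) k (n + m))"
proof -
  obtain P where PM: "P \<in> MAut G1 k n" and hb0: "\<forall>i<k. b i = mat_vec k (fhom G1 k n P) a i"
    using assms(3) by blast
  define A where "A = fhom G1 k n P"
  have hA: "\<forall>i<k. \<forall>j<n. (\<Sum>l<k. A i l * G1 l j) = (\<Sum>l<n. G1 i l * P l j)"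
    using fhom_prop[OF assms(1) PM] by (simp add: A_def)
  have hb: "\<forall>i<k. b i = (\<Sum>l<k. A i l * a l)"
    using hb0 by (simp add: A_def mat_vec_def)
  have img: "code_image (rowspace G1 k n) n P = rowspace G1 k n"
    using PM unfolding MAut_def by blast
  obtain \<sigma> d where s: "\<sigma> permutes {..<n}" and d: "\<forall>i<n. d i \<noteq> 0"
    and Pd: "\<forall>i j. P i j = (if i < n \<and> j < n \<and> j = \<sigma> i then d i else 0)"
    using PM unfolding MAut_def monomial_matrix_def by blast
  have s2: "\<sigma> permutes {..<n+m}" using permutes_subset[OF s] by auto
  define e where "e i = (if i < n then d i else 1)" for i
  define M where "M i j = (if i < n+m \<and> j < n+m \<and> j = \<sigma> i then e i else 0)" for i j
  have mM: "monomial_matrix (n+m) M"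
    unfolding monomial_matrix_def
  proof (intro exI conjI)
    show "\<sigma> permutes {..<n+m}" by (rule s2)
    show "\<forall>i<n+m. e i \<noteq> 0" using d by (simp add: e_def)
    show "\<forall>i j. M i j = (if i < n+m \<and> j < n+m \<and> j = \<sigma> i then e i else 0)"
      by (simp add: M_def)
  qed
  have invlt: "inv \<sigma> j < n" if "j < n" for j
    using permutes_in_image[OF permutes_inv[OF s]] that by auto
  have invge: "inv \<sigma> j = j" if "\<not> j < n" for j
    using permutes_inv_eq[OF s] permutes_not_in[OF s] that by auto
  have hP: "(\<Sum>l<n. G1 i l * P l j) = G1 i (inv \<sigma> j) * d (inv \<sigma> j)" if "j < n" for i j
    using sum_monomial[OF s that, of "G1 i" d] Pd by simp
  define row where "row X c = (\<lambda>j. if j < n+m then (\<Sum>i<k. c i * X i j) else 0)"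
    for X :: "nat \<Rightarrow> nat \<Rightarrow> 'a" and c
  define Ga where "Ga = append_cols G1 n m a"
  define Gb where "Gb = append_cols G1 n m b"
  define cA where "cA c l = (\<Sum>i<k. c i * A i l)" for c l
  have claim1: "vec_mat (n+m) (row Gb c) M = row Ga (cA c)" for c
  proof
    fix j
    show "vec_mat (n+m) (row Gb c) M j = row Ga (cA c) j"
    proof -
      have vm: "vec_mat (n+m) (row Gb c) M j = (if j < n+m then row Gb c (inv \<sigma> j) * e (inv \<sigma> j) else 0)"
        using vec_mat_monomial[OF s2, of M e] by (simp add: M_def)
      consider (a) "j < n" | (b) "n \<le> j" "j < n+m" | (c) "\<not> j < n+m" by linarith
      then show ?thesis
      proof cases
        case a
        have "vec_mat (n+m) (row Gb c) M j = (\<Sum>i<k. c i * G1 i (inv \<sigma> j)) * d (inv \<sigma> j)"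
          using vm a invlt[OF a] by (simp add: row_def Gb_def append_cols_def e_def)
        also have "\<dots> = (\<Sum>i<k. c i * (\<Sum>l<n. G1 i l * P l j))"
          using hP[OF a] by (simp add: sum_distrib_right mult.assoc)
        also have "\<dots> = (\<Sum>i<k. c i * (\<Sum>l<k. A i l * G1 l j))"
          by (intro sum.cong) (simp_all add: hA a)
        also have "\<dots> = (\<Sum>l<k. cA c l * G1 l j)"
          unfolding cA_def by (rule swap_lemma)
        also have "\<dots> = row Ga (cA c) j"
          using a by (simp add: row_def Ga_def append_cols_def)
        finally show ?thesis .
      next
        case b
        have "vec_mat (n+m) (row Gb c) M j = (\<Sum>i<k. c i * b i)"
          using vm b invge[of j] by (simp add: row_def Gb_def append_cols_def e_def)
        also have "\<dots> = (\<Sum>i<k. c i * (\<Sum>l<k. A i l * a l))"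
          by (intro sum.cong) (simp_all add: hb)
        also have "\<dots> = (\<Sum>l<k. cA c l * a l)"
          unfolding cA_def by (rule swap_lemma)
        also have "\<dots> = row Ga (cA c) j"
          using b by (simp add: row_def Ga_def append_cols_def)
        finally show ?thesis .
      next
        case c
        then show ?thesis using vm by (simp add: row_def)
      qed
    qed
  qed
  have claim2: "\<exists>c. \<forall>l<k. cA c l = c' l" for c'
  proof -
    define u where "u = (\<lambda>j. if j < n then (\<Sum>i<k. c' i * G1 i j) else 0)"
    have "u \<in> rowspace G1 k n" unfolding u_def rowspace_def by blast
    then have "u \<in> code_image (rowspace G1 k n) n P" using img by simp
    then obtain x where xr: "x \<in> rowspace G1 k n" and ux: "u = vec_mat n x P"
      unfolding code_image_def by blast
    obtain c where xc: "x = (\<lambda>j. if j < n then (\<Sum>i<k. c i * G1 i j) else 0)"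
      using xr unfolding rowspace_def by blast
    have "\<forall>j<n. (\<Sum>l<k. (c' l - cA c l) * G1 l j) = 0"
    proof (intro allI impI)
      fix j assume j: "j < n"
      have "(\<Sum>i<k. c' i * G1 i j) = u j" using j by (simp add: u_def)
      also have "\<dots> = (\<Sum>l<n. x l * P l j)" using ux j by (simp add: vec_mat_def)
      also have "\<dots> = (\<Sum>l<n. (\<Sum>i<k. c i * G1 i l) * P l j)"
        by (rule sum.cong) (simp_all add: xc)
      also have "\<dots> = (\<Sum>i<k. c i * (\<Sum>l<n. G1 i l * P l j))"
        by (rule swap_lemma[symmetric])
      also have "\<dots> = (\<Sum>i<k. c i * (\<Sum>l<k. A i l * G1 l j))"
        by (intro sum.cong) (simp_all add: hA j)
      also have "\<dots> = (\<Sum>l<k. cA c l * G1 l j)"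
        unfolding cA_def by (rule swap_lemma)
      finally show "(\<Sum>l<k. (c' l - cA c l) * G1 l j) = 0"
        by (simp add: algebra_simps sum_subtractf)
    qed
    then have "\<forall>l<k. c' l - cA c l = 0"
      by (rule frr[OF assms(1)])
    then show ?thesis by auto
  qed
  have rsa: "rowspace Ga k (n+m) = range (row Ga)"
    unfolding rowspace_def row_def by auto
  have rsb: "rowspace Gb k (n+m) = range (row Gb)"
    unfolding rowspace_def row_def by auto
  have rowcong: "row X c = row X c'" if "\<forall>l<k. c l = c' l" for X c c'
    unfolding row_def using that by (auto intro!: sum.cong)
  have eq: "rowspace Ga k (n+m) = code_image (rowspace Gb k (n+m)) (n+m) M"
  proof -
    have "code_image (rowspace Gb k (n+m)) (n+m) M = range (\<lambda>c. row Ga (cA c))"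
      unfolding code_image_def rsb using claim1 by (auto simp: image_image)
    also have "\<dots> = range (row Ga)"
    proof
      show "range (\<lambda>c. row Ga (cA c)) \<subseteq> range (row Ga)" by auto
      show "range (row Ga) \<subseteq> range (\<lambda>c. row Ga (cA c))"
      proof
        fix y assume "y \<in> range (row Ga)"
        then obtain c' where y: "y = row Ga c'" by blast
        obtain c where "\<forall>l<k. cA c l = c' l" using claim2 by blast
        then have "y = row Ga (cA c)" using y rowcong by metis
        then show "y \<in> range (\<lambda>c. row Ga (cA c))" by blast
      qed
    qed
    finally show ?thesis using rsa by simp
  qed
  have "monomially_equivalent (n+m) (rowspace Gb k (n+m)) (rowspace Ga k (n+m))"
    unfolding monomially_equivalent_def using mM eq by blast
  moreover have "\<forall>x\<in>rowspace Gb k (n+m). \<forall>j\<ge>n+m. x j = 0"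
    unfolding rowspace_def by auto
  ultimately show ?thesis
    using monomially_equivalent_sym unfolding Ga_def Gb_def by blast
qed

end
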